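(* Let $\pi_3=2\int_0^1\frac{\mathrm{d}t}{\sqrt{1-t^6}}$ and let $\mathrm{sleaf}_3:\mathbb{R}\to\mathbb{R}$ be the leaf function of basis $3$. Let $m$ be an integer, $l$ real, $s=\mathrm{sleaf}_3(l)$, and $$A=\frac12\sqrt{-1-s^2+2s^4+\frac{2-2s^6}{\sqrt{1+s^2+s^4}}}.$$ (i) If $\frac{\pi_3}{2}(4m-1)\le l\le\frac{\pi_3}{2}(4m+1)$, then $\Bigl(\mathrm{sleaf}_3\Bigl(\frac l2\Bigr)\Bigr)^2=-\frac12 s^2+\frac12\sqrt{1+s^2+s^4}-A$. (ii) If $\frac{\pi_3}{2}(4m+1)\le l\le\frac{\pi_3}{2}(4m+3)$, then $\Bigl(\mathrm{sleaf}_3\Bigl(\frac l2\Bigr)\Bigr)^2=-\frac12 s^2+\frac12\sqrt{1+s^2+s^4}+A$.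
   Context: For a natural number $n$, the leaf function $\mathrm{sleaf}_n:\mathbb{R}\to\mathbb{R}$ is the solution of $\frac{\mathrm{d}^2r}{\mathrm{d}l^2}=-n\,r^{2n-1}$ with $r(0)=0$, $r'(0)=1$; it is periodic with period $2\pi_n$, where $\pi_n=2\int_0^1\frac{\mathrm{d}t}{\sqrt{1-t^{2n}}}$, and on $[-\pi_n/2,\pi_n/2]$ it is the inverse of $r\mapsto\int_0^r\frac{\mathrm{d}t}{\sqrt{1-t^{2n}}}$. *)

theory Defs
  imports "HOL-Analysis.Analysis"
begin

text \<open>The constant pi_n = 2 * int_0^1 dt / sqrt(1 - t^(2n)) (an improper but
  Henstock--Kurzweil/Lebesgue integrable integrand).\<close>
definition leaf_pi :: "nat \<Rightarrow> real" where
  "leaf_pi n = 2 * integral {0..1} (\<lambda>t. 1 / sqrt (1 - t ^ (2 * n)))"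

definition sleaf :: "nat \<Rightarrow> real \<Rightarrow> real" where
  "sleaf n = (THE r. \<exists>r'. (\<forall>x. (r has_real_derivative r' x) (at x)
                      \<and> (r' has_real_derivative (- real n * r x ^ (2 * n - 1))) (at x))
                   \<and> r 0 = 0 \<and> r' 0 = 1)"

end

theory Submission
  imports Defs
begin


definition ff :: "real \<Rightarrow> real" where "ff t = 1 / sqrt (1 - t ^ 6)"

lemma g_has_int: "((\<lambda>t. 1 / sqrt (1 - t)) has_integral 2) {0..1::real}"
proof -
  have "((\<lambda>t. 1 / sqrt (1 - t)) has_integral ((\<lambda>t. - 2 * sqrt (1 - t)) 1 - (\<lambda>t. - 2 * sqrt (1 - t)) 0)) {0..1::real}"
  proof (rule fundamental_theorem_of_calculus_interior)
    show "continuous_on {0..1::real} (\<lambda>t. - 2 * sqrt (1 - t))"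
      by (intro continuous_intros)
    fix x :: real assume "x \<in> {0<..<1}"
    then have x: "0 < 1 - x" by auto
    show "((\<lambda>t. - 2 * sqrt (1 - t)) has_vector_derivative 1 / sqrt (1 - x)) (at x)"
      unfolding has_real_derivative_iff_has_vector_derivative[symmetric]
      using x by (auto intro!: derivative_eq_intros simp: field_simps)
  qed auto
  then show ?thesis by simp
qed

lemma ff_meas: "ff \<in> borel_measurable (lebesgue_on {0..1})"
proof -
  have id: "(\<lambda>x::real. x) \<in> borel_measurable (lebesgue_on {0..1})"
    by (rule continuous_imp_measurable_on_sets_lebesgue) (auto intro: continuous_intros)
  have b: "ff \<in> borel_measurable borel" unfolding ff_def by measurable
  show ?thesis using measurable_compose[OF id b] by (simp add: o_def)
qed

lemma ff_int01: "ff integrable_on {0..1}"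
proof (rule measurable_bounded_by_integrable_imp_integrable[OF ff_meas])
  show "(\<lambda>t. 1 / sqrt (1 - t)) integrable_on {0..1::real}" using g_has_int by blast
  fix x :: real assume x: "x \<in> {0..1}"
  show "norm (ff x) \<le> 1 / sqrt (1 - x)"
  proof (cases "x = 1")
    case True then show ?thesis by (simp add: ff_def)
  next
    case False
    with x have x1: "0 \<le> x" "x < 1" by auto
    have "x ^ 6 \<le> x" using x1 by (metis power_one_right power_decreasing[of 1 6 x] less_imp_le one_le_numeral)
    then have "1 - x \<le> 1 - x^6" by simp
    moreover have "0 < 1 - x" using x1 by simp
    ultimately show ?thesis unfolding ff_def using x1
      by (auto simp: frac_le real_sqrt_le_mono)
  qed
qed auto

definition KK :: real where "KK = integral {0..1} ff"

lemma ff_even: "ff (-x) = ff x" by (simp add: ff_def)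

lemma ff_hasint01: "(ff has_integral KK) {0..1}"
  using ff_int01 unfolding KK_def by (simp add: has_integral_integral)

lemma ff_hasint10: "(ff has_integral KK) {-1..0}"
proof -
  have "((\<lambda>x. ff (-x)) has_integral KK) {-1..-0}"
    using has_integral_reflect_real[where f=ff and i=KK and a=0 and b=1] ff_hasint01 by blast
  then show ?thesis by (simp add: ff_even)
qed

lemma ff_hasint11: "(ff has_integral (2*KK)) {-1..1}"
  using has_integral_combine[OF _ _ ff_hasint10 ff_hasint01] by simp

lemma ff_int11: "ff integrable_on {-1..1}" using ff_hasint11 by blast

lemma leaf_pi3: "leaf_pi 3 = 2 * KK"
  unfolding leaf_pi_def KK_def ff_def by simp

definition clamp :: "real \<Rightarrow> real" where "clamp r = max (-1) (min 1 r)"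

definition GG :: "real \<Rightarrow> real" where "GG r = integral {-1..clamp r} ff - KK"

lemma clamp_in: "clamp r \<in> {-1..1}" by (auto simp: clamp_def)
lemma clamp_id: "r \<in> {-1..1} \<Longrightarrow> clamp r = r" by (auto simp: clamp_def)

lemma GG_cont: "continuous_on UNIV GG"
proof -
  have c1: "continuous_on {-1..1} (\<lambda>x. integral {-1..x} ff)"
    by (rule indefinite_integral_continuous_1[OF ff_int11])
  have c2: "continuous_on UNIV clamp" unfolding clamp_def by (intro continuous_intros)
  have "continuous_on UNIV (\<lambda>r. integral {-1..clamp r} ff)"
    by (rule continuous_on_compose2[OF c1 c2]) (use clamp_in in auto)
  then show ?thesis unfolding GG_def by (intro continuous_intros)
qed

lemma GG_isCont: "isCont GG x"
  using GG_cont by (simp add: continuous_on_eq_continuous_at)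

lemma GG_m1: "GG (-1) = - KK" by (simp add: GG_def clamp_def)
lemma GG_1: "GG 1 = KK"
  using ff_hasint11 by (simp add: GG_def clamp_def integral_unique)
lemma GG_0: "GG 0 = 0"
  using ff_hasint10 by (simp add: GG_def clamp_def integral_unique)

lemma ff_pos: "x \<in> {-1<..<1} \<Longrightarrow> ff x > 0"
proof -
  assume "x \<in> {-1<..<1}"
  then have "\<bar>x\<bar> < 1" by auto
  then have "\<bar>x\<bar> ^ 6 < 1 ^ 6" by (intro power_strict_mono) auto
  then have "\<bar>x^6\<bar> < 1" by (simp only: power_abs power_one)
  then have "x^6 < 1" by (meson abs_ge_self le_less_trans)
  then show ?thesis by (simp add: ff_def)
qed

lemma GG_deriv: assumes "x \<in> {-1<..<1}" shows "(GG has_real_derivative ff x) (at x)"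
proof -
  have xi: "x \<in> interior {-1..1::real}" using assms by simp
  have ctf: "continuous (at x) ff"
  proof -
    have "1 - x^6 \<noteq> 0" using ff_pos[OF assms] by (auto simp: ff_def)
    then show ?thesis unfolding ff_def by (intro continuous_intros) auto
  qed
  have "((\<lambda>u. integral {-1..u} ff) has_vector_derivative ff x) (at x within ({-1..1} - {}))"
    by (rule integral_has_vector_derivative_continuous_at[OF ff_int11])
       (use assms ctf in \<open>auto intro: continuous_at_imp_continuous_within\<close>)
  then have "((\<lambda>u. integral {-1..u} ff) has_real_derivative ff x) (at x)"
    using at_within_interior[OF xi]
    by (simp add: has_real_derivative_iff_has_vector_derivative)
  then have "((\<lambda>u. integral {-1..u} ff - KK) has_real_derivative ff x) (at x)"
    by (auto intro!: derivative_eq_intros)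
  then show ?thesis
    by (rule has_field_derivative_transform_within_open[where S="{-1<..<1}"])
       (use assms in \<open>auto simp: GG_def clamp_id\<close>)
qed

lemma GG_strict: assumes "-1 \<le> a" "a < b" "b \<le> 1" shows "GG a < GG b"
  apply (rule DERIV_pos_imp_increasing_open[OF assms(2)])
  subgoal for x using GG_deriv[of x] ff_pos[of x] assms by force
  using GG_cont continuous_on_subset by blast

lemma KK_pos: "KK > 0" using GG_strict[of 0 1] GG_0 GG_1 by simp

lemma GG_image: "GG ` {-1..1} = {-KK..KK}"
proof
  show "GG ` {-1..1} \<subseteq> {-KK..KK}"
  proof
    fix y assume "y \<in> GG ` {-1..1}"
    then obtain r where r: "r \<in> {-1..1}" "y = GG r" by auto
    have "GG (-1) \<le> GG r" using GG_strict[of "-1" r] r by (cases "r = -1") force+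
    moreover have "GG r \<le> GG 1" using GG_strict[of r 1] r by (cases "r = 1") force+
    ultimately show "y \<in> {-KK..KK}" using r GG_m1 GG_1 by auto
  qed
  show "{-KK..KK} \<subseteq> GG ` {-1..1}"
  proof
    fix y assume y: "y \<in> {-KK..KK}"
    obtain r where "r \<ge> -1" "r \<le> 1" "GG r = y"
      using IVT[of GG "-1" y 1] y GG_m1 GG_1 GG_isCont by auto
    then show "y \<in> GG ` {-1..1}" by force
  qed
qed

lemma GG_inj: "inj_on GG {-1..1}"
  unfolding inj_on_def
  by (metis GG_strict atLeastAtMost_iff linorder_neqE_linordered_idom order_less_irrefl)

definition Sinv :: "real \<Rightarrow> real" where "Sinv y = (THE r. r \<in> {-1..1} \<and> GG r = y)"

lemma Sinv_GG: "r \<in> {-1..1} \<Longrightarrow> Sinv (GG r) = r"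
  unfolding Sinv_def
  by (rule the_equality) (use GG_inj in \<open>auto simp: inj_on_def\<close>)

lemma Sinv_props: assumes "y \<in> {-KK..KK}" shows "Sinv y \<in> {-1..1}" "GG (Sinv y) = y"
proof -
  obtain r where r: "r \<in> {-1..1}" "GG r = y" using assms GG_image by force
  then show "Sinv y \<in> {-1..1}" "GG (Sinv y) = y" using Sinv_GG[OF r(1)] by auto
qed

lemma Sinv_cont: "continuous_on {-KK..KK} Sinv"
  using continuous_on_inv[of "{-1..1}" GG Sinv] GG_image Sinv_GG
    continuous_on_subset[OF GG_cont] by auto

lemma Sinv_m1: "Sinv (-KK) = -1" using Sinv_GG[of "-1"] GG_m1 by simp
lemma Sinv_1: "Sinv KK = 1" using Sinv_GG[of "1"] GG_1 by simp
lemma Sinv_0: "Sinv 0 = 0" using Sinv_GG[of "0"] GG_0 by simp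

lemma Sinv_open: assumes "y \<in> {-KK<..<KK}" shows "Sinv y \<in> {-1<..<1}"
proof -
  have "Sinv y \<in> {-1..1}" "GG (Sinv y) = y" using Sinv_props[of y] assms by auto
  moreover have "Sinv y \<noteq> -1" "Sinv y \<noteq> 1" using calculation assms GG_m1 GG_1 by auto
  ultimately show ?thesis by auto
qed

lemma Sinv_deriv: assumes "y \<in> {-KK<..<KK}"
  shows "(Sinv has_real_derivative sqrt (1 - Sinv y ^ 6)) (at y)"
proof -
  have o: "Sinv y \<in> {-1<..<1}" using Sinv_open[OF assms] .
  have "(Sinv has_real_derivative inverse (ff (Sinv y))) (at y)"
  proof (rule DERIV_inverse_function[where a="-KK" and b=KK])
    show "(GG has_real_derivative ff (Sinv y)) (at (Sinv y))" using GG_deriv[OF o] .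
    show "ff (Sinv y) \<noteq> 0" using ff_pos[OF o] by simp
    show "- KK < y" "y < KK" using assms by auto
    show "GG (Sinv z) = z" if "- KK < z" "z < KK" for z using Sinv_props[of z] that by auto
    show "isCont Sinv y"
      using Sinv_cont assms continuous_on_interior[of "{-KK..KK}" Sinv y] by auto
  qed
  then show ?thesis by (simp add: ff_def)
qed



lemma deriv_limit:
  fixes f g :: "real \<Rightarrow> real"
  assumes cf: "isCont f a" and cg: "isCont g a" and d: "d > 0"
    and der: "\<And>y. y \<noteq> a \<Longrightarrow> \<bar>y - a\<bar> < d \<Longrightarrow> (f has_real_derivative g y) (at y)"
  shows "(f has_real_derivative g a) (at a)"
  unfolding has_field_derivative_iff LIM_eq
proof (intro allI impI)
  fix r :: real assume r: "r > 0"
  from cg r obtain s1 where s1: "s1 > 0" "\<And>z. \<bar>z - a\<bar> < s1 \<Longrightarrow> \<bar>g z - g a\<bar> < r"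
    unfolding continuous_at LIM_eq by (metis diff_self abs_zero real_norm_def)
  have cont: "isCont f z" if "\<bar>z - a\<bar> < d" for z
    using that cf der[of z] DERIV_isCont by (cases "z = a") auto
  show "\<exists>s>0. \<forall>y. y \<noteq> a \<and> norm (y - a) < s \<longrightarrow> norm ((f y - f a) / (y - a) - g a) < r"
  proof (intro exI[of _ "min d s1"] conjI allI impI)
    show "min d s1 > 0" using d s1 by auto
    fix y assume y: "y \<noteq> a \<and> norm (y - a) < min d s1"
    define lo where "lo = min y a"
    define hi where "hi = max y a"
    have lohi: "lo < hi" using y by (auto simp: lo_def hi_def)
    have sub: "\<And>z. lo \<le> z \<Longrightarrow> z \<le> hi \<Longrightarrow> \<bar>z - a\<bar> < d"
      using y by (auto simp: lo_def hi_def)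
    have "continuous_on {lo..hi} f"
      using cont sub by (intro continuous_at_imp_continuous_on) auto
    moreover have "\<And>z. lo < z \<Longrightarrow> z < hi \<Longrightarrow> f differentiable (at z)"
    proof -
      fix z assume z: "lo < z" "z < hi"
      then have "z \<noteq> a" using y by (auto simp: lo_def hi_def)
      then show "f differentiable (at z)" using der[of z] sub[of z] z
        by (auto simp: real_differentiable_def)
    qed
    ultimately obtain l z where z: "lo < z" "z < hi" "(f has_real_derivative l) (at z)"
      "f hi - f lo = (hi - lo) * l"
      using MVT[OF lohi] by blast
    have za: "z \<noteq> a" using z y by (auto simp: lo_def hi_def)
    have "l = g z" using DERIV_unique[OF z(3) der[OF za sub]] z by auto
    moreover have "(f y - f a) / (y - a) = (f hi - f lo) / (hi - lo)"
      using y by (cases "y < a") (auto simp: lo_def hi_def field_simps)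
    ultimately have eq: "(f y - f a) / (y - a) = g z" using z lohi by auto
    have "\<bar>z - a\<bar> < s1" using z y by (auto simp: lo_def hi_def)
    then show "norm ((f y - f a) / (y - a) - g a) < r" using s1 eq by simp
  qed
qed

definition th :: "real \<Rightarrow> real" where "th x = pi * x / (2 * KK)"
definition tri :: "real \<Rightarrow> real" where "tri x = (2 * KK / pi) * arcsin (sin (th x))"
definition SS :: "real \<Rightarrow> real" where "SS x = Sinv (tri x)"
definition CC :: "real \<Rightarrow> real" where "CC x = sgn (cos (th x)) * sqrt (1 - SS x ^ 6)"

lemma tri_range: "tri x \<in> {-KK..KK}"
proof -
  have a1: "- (pi/2) \<le> arcsin (sin (th x))" by (rule arcsin_lbound) auto
  have a2: "arcsin (sin (th x)) \<le> pi/2" by (rule arcsin_ubound) auto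
  have p: "0 \<le> 2*KK/pi" using KK_pos by simp
  have "(2*KK/pi) * arcsin (sin (th x)) \<le> (2*KK/pi) * (pi/2)"
    by (rule mult_left_mono[OF a2 p])
  moreover have "(2*KK/pi) * (- (pi/2)) \<le> (2*KK/pi) * arcsin (sin (th x))"
    by (rule mult_left_mono[OF a1 p])
  ultimately show ?thesis unfolding tri_def by auto
qed

lemma sin_open: "cos (t::real) \<noteq> 0 \<Longrightarrow> -1 < sin t \<and> sin t < 1"
proof -
  assume "cos t \<noteq> 0"
  then have "(cos t)^2 > 0" by simp
  then have "(sin t)^2 < 1" using sin_cos_squared_add[of t] by linarith
  then have "\<bar>sin t\<bar> < 1" by (simp only: abs_square_less_1)
  then show ?thesis by linarith
qed

lemma tri_open: "cos (th x) \<noteq> 0 \<Longrightarrow> tri x \<in> {-KK<..<KK}"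
proof -
  assume "cos (th x) \<noteq> 0"
  then have a1: "- (pi/2) < arcsin (sin (th x))" and a2: "arcsin (sin (th x)) < pi/2"
    using sin_open arcsin_lt_bounded by blast+
  have p: "0 < 2*KK/pi" using KK_pos by simp
  have "(2*KK/pi) * arcsin (sin (th x)) < (2*KK/pi) * (pi/2)"
    by (rule mult_strict_left_mono[OF a2 p])
  moreover have "(2*KK/pi) * (- (pi/2)) < (2*KK/pi) * arcsin (sin (th x))"
    by (rule mult_strict_left_mono[OF a1 p])
  ultimately show ?thesis unfolding tri_def by auto
qed

lemma tri_cos0: "cos (th x) = 0 \<Longrightarrow> SS x ^ 6 = 1"
proof -
  assume "cos (th x) = 0"
  then have "(sin (th x))^2 = 1" using sin_cos_squared_add[of "th x"] by simp
  then have "sin (th x) = 1 \<or> sin (th x) = -1" by (simp add: power2_eq_1_iff)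
  then have "tri x = KK \<or> tri x = -KK" unfolding tri_def using KK_pos by auto
  then show ?thesis unfolding SS_def using Sinv_1 Sinv_m1 by auto
qed

lemma SS_range: "SS x \<in> {-1..1}"
  unfolding SS_def using Sinv_props tri_range by blast

lemma SS6_le: "SS x ^ 6 \<le> 1"
proof -
  have "\<bar>SS x\<bar> \<le> 1" using SS_range[of x] by auto
  then have "\<bar>SS x\<bar> ^ 6 \<le> 1 ^ 6" by (intro power_mono) auto
  then have "\<bar>SS x ^ 6\<bar> \<le> 1" by (simp only: power_abs power_one)
  then show ?thesis by (meson abs_ge_self order_trans)
qed

lemma SS_cont: "continuous_on UNIV SS"
proof -
  have "continuous_on UNIV tri" unfolding tri_def th_def
    by (intro continuous_intros) (use KK_pos in auto)
  then show ?thesis unfolding SS_def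
    by (rule continuous_on_compose2[OF Sinv_cont]) (use tri_range in auto)
qed

lemma SS_isCont: "isCont SS x" using SS_cont by (simp add: continuous_on_eq_continuous_at)

lemma SS_0: "SS 0 = 0" by (simp add: SS_def tri_def th_def Sinv_0)
lemma CC_0: "CC 0 = 1" by (simp add: CC_def th_def SS_0)

lemma tri_deriv: assumes "cos (th x) \<noteq> 0"
  shows "(tri has_real_derivative sgn (cos (th x))) (at x)"
proof -
  have so: "-1 < sin (th x)" "sin (th x) < 1" using sin_open[OF assms] by auto
  have th: "(th has_real_derivative pi / (2*KK)) (at x)"
    unfolding th_def[abs_def] using KK_pos by (auto intro!: derivative_eq_intros)
  have "((\<lambda>x. arcsin (sin (th x))) has_real_derivative
      inverse (sqrt (1 - (sin (th x))\<^sup>2)) * (cos (th x) * (pi / (2*KK)))) (at x)"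
    by (rule DERIV_chain2[where f=arcsin and g="\<lambda>x. sin (th x)", OF DERIV_arcsin[OF so]])
       (rule DERIV_chain2[where f=sin and g=th, OF DERIV_sin th])
  then have "(tri has_real_derivative (2 * KK / pi) * (inverse (sqrt (1 - (sin (th x))\<^sup>2)) * (cos (th x) * (pi / (2*KK))))) (at x)"
    unfolding tri_def[abs_def] by (intro DERIV_cmult)
  moreover have "sqrt (1 - (sin (th x))\<^sup>2) = \<bar>cos (th x)\<bar>"
    by (simp add: cos_squared_eq[symmetric])
  moreover have "(2 * KK / pi) * (inverse \<bar>cos (th x)\<bar> * (cos (th x) * (pi / (2*KK)))) = sgn (cos (th x))"
    using KK_pos assms by (auto simp: sgn_real_def field_simps)
  ultimately show ?thesis by simp
qed

lemma SS_deriv_gen: assumes "cos (th x) \<noteq> 0"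
  shows "(SS has_real_derivative CC x) (at x)"
proof -
  have "((\<lambda>x. Sinv (tri x)) has_real_derivative sqrt (1 - Sinv (tri x) ^ 6) * sgn (cos (th x))) (at x)"
    by (rule DERIV_chain2[OF Sinv_deriv[OF tri_open[OF assms]] tri_deriv[OF assms]])
  then show ?thesis unfolding SS_def[abs_def] CC_def by (simp add: mult.commute)
qed

lemma CC_deriv_gen: assumes "cos (th x) \<noteq> 0"
  shows "(CC has_real_derivative - 3 * SS x ^ 5) (at x)"
proof -
  define \<sigma> where "\<sigma> = sgn (cos (th x))"
  have s2: "\<sigma> * \<sigma> = 1" using assms by (auto simp: \<sigma>_def sgn_real_def)
  have cth: "continuous_on UNIV (\<lambda>y. \<sigma> * cos (th y))" unfolding th_def
    by (intro continuous_intros) (use KK_pos in auto)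
  define U where "U = {y. 0 < \<sigma> * cos (th y)}"
  have oU: "open U" unfolding U_def
    using open_Collect_less[of "\<lambda>_. 0" "\<lambda>y. \<sigma> * cos (th y)"] cth
    by (simp add: continuous_on_eq_continuous_at)
  have xU: "x \<in> U" using assms by (auto simp: U_def \<sigma>_def sgn_real_def)
  have eqU: "\<sigma> * sqrt (1 - SS y ^ 6) = CC y" if "y \<in> U" for y
  proof -
    have "sgn (cos (th y)) = \<sigma>" using that assms
      by (auto simp: U_def \<sigma>_def sgn_real_def zero_less_mult_iff split: if_splits)
    then show ?thesis by (simp add: CC_def)
  qed
  have sin1: "SS x \<in> {-1<..<1}" unfolding SS_def using Sinv_open tri_open assms by blast
  have "\<bar>SS x\<bar> < 1" using sin1 by auto
  then have "\<bar>SS x\<bar> ^ 6 < 1 ^ 6" by (intro power_strict_mono) auto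
  then have "\<bar>SS x ^ 6\<bar> < 1" by (simp only: power_abs power_one)
  then have pos: "0 < 1 - SS x ^ 6" by (meson abs_ge_self le_less_trans diff_gt_0_iff_gt)
  have dA: "((\<lambda>y. \<sigma> * sqrt (1 - SS y ^ 6)) has_real_derivative
        \<sigma> * (inverse (sqrt (1 - SS x ^ 6)) / 2 * (- (6 * SS x ^ 5 * CC x)))) (at x)"
    using pos by (auto intro!: derivative_eq_intros SS_deriv_gen[OF assms] simp: power_eq_if)
  have eqB: "\<sigma> * (inverse (sqrt (1 - SS x ^ 6)) / 2 * (- (6 * SS x ^ 5 * CC x))) = - 3 * SS x ^ 5"
  proof -
    have "CC x = \<sigma> * sqrt (1 - SS x ^ 6)" by (simp add: CC_def \<sigma>_def)
    moreover have "sqrt (1 - SS x ^ 6) > 0" using pos by simp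
    ultimately show ?thesis using s2 by (auto simp: field_simps)
  qed
  have "((\<lambda>y. \<sigma> * sqrt (1 - SS y ^ 6)) has_real_derivative - 3 * SS x ^ 5) (at x)"
    using dA unfolding eqB .
  then show ?thesis
    using has_field_derivative_transform_within_open[where S=U and f="\<lambda>y. \<sigma> * sqrt (1 - SS y ^ 6)" and g=CC] oU xU eqU
    by blast
qed



lemma cos_isolated:
  assumes a: "cos (th a) = 0" and y: "y \<noteq> a" "\<bar>y - a\<bar> < KK"
  shows "cos (th y) \<noteq> 0"
proof -
  define \<delta> where "\<delta> = pi * (y - a) / (2 * KK)"
  have thy: "th y = th a + \<delta>" unfolding th_def \<delta>_def using KK_pos by (simp add: field_simps)
  have "(sin (th a))^2 = 1" using sin_cos_squared_add[of "th a"] a by simp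
  then have sa: "sin (th a) \<noteq> 0" by auto
  have "\<bar>\<delta>\<bar> < pi/2"
  proof -
    have "\<bar>\<delta>\<bar> = pi * \<bar>y - a\<bar> / (2 * KK)" unfolding \<delta>_def using KK_pos by (simp add: abs_mult)
    also have "\<dots> < pi * KK / (2 * KK)" using y KK_pos by (intro divide_strict_right_mono mult_strict_left_mono) auto
    also have "\<dots> = pi / 2" using KK_pos by simp
    finally show ?thesis .
  qed
  moreover have "\<delta> \<noteq> 0" unfolding \<delta>_def using y KK_pos by auto
  ultimately have sd: "sin \<delta> \<noteq> 0"
  proof (cases "\<delta> > 0")
    case True
    then show ?thesis using \<open>\<bar>\<delta>\<bar> < pi/2\<close> sin_gt_zero[of \<delta>] by auto
  next
    case False
    then have "0 < - \<delta>" "- \<delta> < pi" using \<open>\<delta> \<noteq> 0\<close> \<open>\<bar>\<delta>\<bar> < pi/2\<close> by auto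
    then show ?thesis using sin_gt_zero[of "-\<delta>"] by auto
  qed
  have "cos (th y) = - sin (th a) * sin \<delta>" using a by (simp add: thy cos_add)
  then show ?thesis using sa sd by simp
qed

lemma CC_isCont: "isCont CC x"
proof (cases "cos (th x) = 0")
  case False
  then show ?thesis using CC_deriv_gen DERIV_isCont by blast
next
  case True
  then have c0: "CC x = 0" using tri_cos0 by (simp add: CC_def)
  have g: "((\<lambda>y. sqrt (1 - SS y ^ 6)) \<longlongrightarrow> sqrt (1 - SS x ^ 6)) (at x)"
    using SS_isCont unfolding isCont_def by (intro tendsto_intros) auto
  have "(CC \<longlongrightarrow> 0) (at x)"
  proof (rule Lim_null_comparison[where g="\<lambda>y. sqrt (1 - SS y ^ 6)"])
    show "\<forall>\<^sub>F y in at x. norm (CC y) \<le> sqrt (1 - SS y ^ 6)"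
    proof (rule always_eventually, rule allI)
      fix y
      have "\<bar>sgn (cos (th y))\<bar> \<le> 1" by (simp add: sgn_real_def)
      moreover have "0 \<le> sqrt (1 - SS y ^ 6)" using SS6_le[of y] by simp
      ultimately show "norm (CC y) \<le> sqrt (1 - SS y ^ 6)" unfolding CC_def
        by (simp add: abs_mult mult_left_le_one_le)
    qed
    show "((\<lambda>y. sqrt (1 - SS y ^ 6)) \<longlongrightarrow> 0) (at x)" using g tri_cos0[OF True] by simp
  qed
  then show ?thesis using c0 by (simp add: isCont_def)
qed

lemma SS_deriv: "(SS has_real_derivative CC x) (at x)"
proof (cases "cos (th x) = 0")
  case False
  then show ?thesis by (rule SS_deriv_gen)
next
  case True
  show ?thesis
    by (rule deriv_limit[OF SS_isCont CC_isCont KK_pos])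
       (use cos_isolated[OF True] SS_deriv_gen in auto)
qed

lemma CC_deriv: "(CC has_real_derivative - 3 * SS x ^ 5) (at x)"
proof (cases "cos (th x) = 0")
  case False
  then show ?thesis by (rule CC_deriv_gen)
next
  case True
  have c: "isCont (\<lambda>y. - 3 * SS y ^ 5) x" using SS_isCont by (intro continuous_intros)
  show ?thesis
    by (rule deriv_limit[OF CC_isCont c KK_pos])
       (use cos_isolated[OF True] CC_deriv_gen in auto)
qed

definition sol :: "(real \<Rightarrow> real) \<Rightarrow> (real \<Rightarrow> real) \<Rightarrow> bool" where
  "sol r p \<longleftrightarrow> (\<forall>x. (r has_real_derivative p x) (at x) \<and> (p has_real_derivative (- 3 * r x ^ 5)) (at x))
     \<and> r 0 = 0 \<and> p 0 = 1"

lemma sol_SS: "sol SS CC" unfolding sol_def using SS_deriv CC_deriv SS_0 CC_0 by auto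

lemma sol_energy: assumes "sol r p" shows "p x ^ 2 + r x ^ 6 = 1"
proof -
  have d: "((\<lambda>x. p x ^ 2 + r x ^ 6) has_real_derivative 0) (at y)" for y
  proof -
    have dr: "(r has_real_derivative p y) (at y)" and dp: "(p has_real_derivative - 3 * r y ^ 5) (at y)"
      using assms unfolding sol_def by auto
    have "((\<lambda>x. p x ^ 2 + r x ^ 6) has_real_derivative
       (of_nat 2 * ((- 3 * r y ^ 5) * p y ^ (2 - Suc 0)) + of_nat 6 * (p y * r y ^ (6 - Suc 0)))) (at y)"
      by (rule DERIV_add[OF DERIV_power[OF dp] DERIV_power[OF dr]])
    then show ?thesis by (simp add: algebra_simps)
  qed
  have "p x ^ 2 + r x ^ 6 = p 0 ^ 2 + r 0 ^ 6"
    by (rule DERIV_isconst_all) (use d in auto)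
  then show ?thesis using assms unfolding sol_def by simp
qed

lemma sol_bound: assumes "sol r p" shows "\<bar>r x\<bar> \<le> 1"
proof (rule ccontr)
  assume "\<not> \<bar>r x\<bar> \<le> 1"
  then have "1 < \<bar>r x\<bar>" by simp
  then have "1 ^ 6 < \<bar>r x\<bar> ^ 6" by (intro power_strict_mono) auto
  then have "1 < r x ^ 6" by (simp add: power_abs[symmetric])
  moreover have "0 \<le> p x ^ 2" by simp
  ultimately show False using sol_energy[OF assms, of x] by linarith
qed

lemma pow_le1: "\<bar>a::real\<bar> \<le> 1 \<Longrightarrow> \<bar>b\<bar> \<le> 1 \<Longrightarrow> \<bar>a ^ i * b ^ j\<bar> \<le> 1"
  by (simp add: abs_mult power_abs mult_le_one power_le_one)

lemma pow5_lip: assumes "\<bar>a::real\<bar> \<le> 1" "\<bar>b\<bar> \<le> 1" shows "\<bar>a^5 - b^5\<bar> \<le> 5 * \<bar>a - b\<bar>"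
proof -
  have e: "a^5 - b^5 = (a - b) * (a^4*b^0 + a^3*b^1 + a^2*b^2 + a^1*b^3 + a^0*b^4)"
    by (simp add: algebra_simps power_eq_if)
  have "\<bar>a^4*b^0 + a^3*b^1 + a^2*b^2 + a^1*b^3 + a^0*b^4\<bar> \<le> 5"
    using pow_le1[OF assms, of 4 0] pow_le1[OF assms, of 3 1] pow_le1[OF assms, of 2 2]
      pow_le1[OF assms, of 1 3] pow_le1[OF assms, of 0 4] by linarith
  then show ?thesis unfolding e abs_mult by (simp add: mult.commute mult_left_mono)
qed

lemma sol_unique: assumes s1: "sol r1 p1" and s2: "sol r2 p2" shows "r1 x = r2 x"
proof -
  define W where "W x = (r1 x - r2 x)^2 + (p1 x - p2 x)^2" for x
  define W' where "W' x = 2 * (r1 x - r2 x) * (p1 x - p2 x) + 2 * (p1 x - p2 x) * (- 3 * r1 x ^ 5 + 3 * r2 x ^ 5)" for x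
  have dW: "(W has_real_derivative W' y) (at y)" for y
  proof -
    have dr1: "(r1 has_real_derivative p1 y) (at y)" and dp1: "(p1 has_real_derivative - 3 * r1 y ^ 5) (at y)"
      using s1 unfolding sol_def by auto
    have dr2: "(r2 has_real_derivative p2 y) (at y)" and dp2: "(p2 has_real_derivative - 3 * r2 y ^ 5) (at y)"
      using s2 unfolding sol_def by auto
    have "(W has_real_derivative (of_nat 2 * ((p1 y - p2 y) * (r1 y - r2 y) ^ (2 - Suc 0)) +
       of_nat 2 * (((- 3 * r1 y ^ 5) - (- 3 * r2 y ^ 5)) * (p1 y - p2 y) ^ (2 - Suc 0)))) (at y)"
      unfolding W_def[abs_def]
      by (rule DERIV_add[OF DERIV_power[OF DERIV_diff[OF dr1 dr2]] DERIV_power[OF DERIV_diff[OF dp1 dp2]]])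
    then show ?thesis by (simp add: W'_def algebra_simps)
  qed
  have bnd: "\<bar>W' y\<bar> \<le> 16 * W y" for y
  proof -
    define d where "d = r1 y - r2 y"
    define e where "e = p1 y - p2 y"
    define q where "q = r1 y ^ 5 - r2 y ^ 5"
    have q: "\<bar>q\<bar> \<le> 5 * \<bar>d\<bar>" unfolding q_def d_def
      by (rule pow5_lip[OF sol_bound[OF s1] sol_bound[OF s2]])
    have W'eq: "W' y = 2 * d * e - 6 * e * q" unfolding W'_def d_def e_def q_def by (simp add: algebra_simps)
    have Weq: "W y = d^2 + e^2" unfolding W_def d_def e_def by simp
    define P where "P = \<bar>e\<bar> * \<bar>d\<bar>"
    have h1: "\<bar>e\<bar> * \<bar>q\<bar> \<le> 5 * P" using q unfolding P_def
      by (metis mult.left_commute abs_ge_zero mult_left_mono)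
    have h2: "2 * P \<le> d^2 + e^2"
    proof -
      have "0 \<le> (\<bar>e\<bar> - \<bar>d\<bar>)^2" by simp
      then show ?thesis unfolding P_def by (simp add: power2_diff power2_abs)
    qed
    have h3: "\<bar>2 * d * e - 6 * e * q\<bar> \<le> 2 * P + 6 * (\<bar>e\<bar> * \<bar>q\<bar>)"
      unfolding P_def by (simp add: abs_mult abs_triangle_ineq4[THEN order_trans] algebra_simps)
    have lin: "\<And>T X P S::real. T \<le> 2*P + 6*X \<Longrightarrow> X \<le> 5*P \<Longrightarrow> 2*P \<le> S \<Longrightarrow> T \<le> 16*S"
      by linarith
    show ?thesis unfolding W'eq Weq by (rule lin[OF h3 h1 h2])
  qed
  have W0: "W 0 = 0" using s1 s2 unfolding W_def sol_def by simp
  have Wnn: "0 \<le> W y" for y unfolding W_def by simp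
  have "W x = 0"
  proof (cases "0 \<le> x")
    case True
    have "(\<lambda>y. W y * exp (- 16 * y)) 0 \<ge> (\<lambda>y. W y * exp (- 16 * y)) x"
    proof (rule DERIV_nonpos_imp_nonincreasing[OF True])
      fix y
      have "((\<lambda>y. W y * exp (- 16 * y)) has_real_derivative (W' y * exp (- 16 * y) + W y * (exp (- 16 * y) * (- 16)))) (at y)"
        by (auto intro!: derivative_eq_intros dW simp: algebra_simps)
      moreover have "W' y * exp (- 16 * y) + W y * (exp (- 16 * y) * (- 16)) \<le> 0"
      proof -
        have "W' y - 16 * W y \<le> 0" using bnd[of y] by linarith
        then have "(W' y - 16 * W y) * exp (- 16 * y) \<le> 0" by (simp add: mult_nonpos_nonneg)
        then show ?thesis by (simp add: algebra_simps)
      qed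
      ultimately show "\<exists>z. ((\<lambda>y. W y * exp (- 16 * y)) has_real_derivative z) (at y) \<and> z \<le> 0" by blast
    qed
    then have "W x * exp (- 16 * x) \<le> 0" using W0 by simp
    then show ?thesis using Wnn[of x] by (simp add: mult_le_0_iff)
  next
    case False
    then have x0: "x \<le> 0" by simp
    have "(\<lambda>y. W y * exp (16 * y)) x \<le> (\<lambda>y. W y * exp (16 * y)) 0"
    proof (rule DERIV_nonneg_imp_nondecreasing[OF x0])
      fix y
      have "((\<lambda>y. W y * exp (16 * y)) has_real_derivative (W' y * exp (16 * y) + W y * (exp (16 * y) * 16))) (at y)"
        by (auto intro!: derivative_eq_intros dW simp: algebra_simps)
      moreover have "0 \<le> W' y * exp (16 * y) + W y * (exp (16 * y) * 16)"
      proof -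
        have "0 \<le> W' y + 16 * W y" using bnd[of y] by linarith
        then have "0 \<le> (W' y + 16 * W y) * exp (16 * y)" by simp
        then show ?thesis by (simp add: algebra_simps)
      qed
      ultimately show "\<exists>z. ((\<lambda>y. W y * exp (16 * y)) has_real_derivative z) (at y) \<and> 0 \<le> z" by blast
    qed
    then have "W x * exp (16 * x) \<le> 0" using W0 by simp
    then show ?thesis using Wnn[of x] by (simp add: mult_le_0_iff)
  qed
  then show ?thesis unfolding W_def by (simp add: add_nonneg_eq_0_iff)
qed

lemma sleaf3_eq: "sleaf 3 = SS"
proof -
  have "sleaf 3 = (THE r. \<exists>r'. sol r r')"
    unfolding sleaf_def sol_def by simp
  also have "\<dots> = SS"
  proof (rule the_equality)
    show "\<exists>r'. sol SS r'" using sol_SS by blast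
    fix r assume "\<exists>r'. sol r r'"
    then obtain r' where "sol r r'" by blast
    then show "r = SS" using sol_unique[OF _ sol_SS] by blast
  qed
  finally show ?thesis .
qed




lemma final_alg:
  fixes u c s :: real
  assumes c2: "c^2 = 1 - u^6"
    and s: "s = 2 * u * c / sqrt (1 + 8 * u^6)"
  defines "R \<equiv> sqrt (1 + s^2 + s^4)"
  defines "A \<equiv> (1/2) * sqrt (-1 - s^2 + 2 * s^4 + (2 - 2 * s^6) / R)"
  shows "(0 \<le> 1 - 20 * u^6 - 8 * u^12 \<longrightarrow> u^2 = - (1/2) * s^2 + (1/2) * R - A)
       \<and> (1 - 20 * u^6 - 8 * u^12 \<le> 0 \<longrightarrow> u^2 = - (1/2) * s^2 + (1/2) * R + A)"
proof -
  define X where "X = u^2"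
  define Y where "Y = s^2"
  have X0: "0 \<le> X" unfolding X_def by simp
  have X3: "X^3 = u^6" unfolding X_def by (simp add: power_mult[symmetric])
  have X6: "X^6 = u^12" unfolding X_def by (simp add: power_mult[symmetric])
  have X1: "X^3 \<le> 1" using c2 X3 by (metis diff_ge_0_iff_ge zero_le_power2)
  have X1': "X \<le> 1"
  proof (rule ccontr)
    assume "\<not> X \<le> 1" then have "1 < X" by simp
    then have "1 ^ 3 < X ^ 3" by (intro power_strict_mono) auto
    then show False using X1 by simp
  qed
  have Q2: "(sqrt (1 + 8 * u^6))^2 = 1 + 8 * X^3" using X3 X0
    by (simp add: X3[symmetric])
  have Qpos: "1 + 8 * X^3 > 0"
  proof -
    have "0 \<le> X^3" using X0 by simp
    then show ?thesis by linarith
  qed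
  have Yeq: "Y * (1 + 8 * X^3) = 4 * X * (1 - X^3)"
  proof -
    have "Y = 4 * u^2 * c^2 / (sqrt (1 + 8 * u^6))^2" unfolding Y_def s
      by (simp add: power_divide power_mult_distrib)
    then have "Y = 4 * X * (1 - X^3) / (1 + 8 * X^3)" unfolding Q2 c2 X3 X_def by simp
    then show ?thesis using Qpos by (simp add: field_simps)
  qed
  have Y0: "0 \<le> Y" unfolding Y_def by simp
  have R2: "R^2 = 1 + Y + Y^2" unfolding R_def Y_def
    by (simp add: power_mult[symmetric] add_nonneg_nonneg)
  have Rpos: "R > 0" unfolding R_def by (simp add: add_pos_nonneg)
  have sqeq: "(1 + Y + Y^2) * (1 + 2*X)^2 = (2*X^2 + 2*X*Y + 1 + Y)^2"
  proof -
    have "(1 + Y + Y^2) * (1 + 2*X)^2 - (2*X^2 + 2*X*Y + 1 + Y)^2 = - Y * (1 + 8 * X^3) + 4 * X * (1 - X^3)"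
      by (simp add: algebra_simps power2_eq_square power3_eq_cube)
    then show ?thesis using Yeq by simp
  qed
  have stepa: "R * (1 + 2*X) = 2*X^2 + 2*X*Y + 1 + Y"
  proof -
    have "(R * (1 + 2*X))^2 = (2*X^2 + 2*X*Y + 1 + Y)^2"
      using sqeq R2 by (simp add: power_mult_distrib)
    moreover have "0 \<le> R * (1 + 2*X)" using Rpos X0 by simp
    moreover have "0 \<le> 2*X^2 + 2*X*Y + 1 + Y" using X0 Y0 by simp
    ultimately show ?thesis using power2_eq_iff_nonneg by blast
  qed
  have rad: "-1 - s^2 + 2 * s^4 + (2 - 2 * s^6) / R = (2*X + Y - R)^2"
  proof -
    have s4: "s^4 = Y^2" "s^6 = Y^3" unfolding Y_def by (simp_all add: power_mult[symmetric])
    have "(2 - 2 * Y^3) = 2 * (1 - Y) * R^2" unfolding R2 by (simp add: algebra_simps power2_eq_square power3_eq_cube)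
    then have "(2 - 2 * Y^3) / R = 2 * (1 - Y) * R" using Rpos by (simp add: power2_eq_square)
    then have "-1 - s^2 + 2 * s^4 + (2 - 2 * s^6) / R = -1 - Y + 2 * Y^2 + 2 * (1 - Y) * R"
      unfolding s4 Y_def by simp
    also have "\<dots> = (2*X + Y - R)^2"
    proof -
      have "(2*X + Y - R)^2 - (-1 - Y + 2 * Y^2 + 2 * (1 - Y) * R)
          = 4*X^2 + Y^2 + R^2 + 4*X*Y - 4*X*R - 2*Y*R + 1 + Y - 2*Y^2 - 2*R + 2*Y*R"
        by (simp add: algebra_simps power2_eq_square)
      also have "\<dots> = 2 * (2*X^2 + 2*X*Y + 1 + Y) - 2 * (R * (1 + 2*X))"
        unfolding R2 by (simp add: algebra_simps power2_eq_square)
      also have "\<dots> = 0" unfolding stepa by simp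
      finally show ?thesis by simp
    qed
    finally show ?thesis .
  qed
  have Aeq: "2 * A = \<bar>2*X + Y - R\<bar>" unfolding A_def rad by simp
  define g where "g = 2*X^2 + 2*X - 1"
  have q1eq: "1 - 20 * u^6 - 8 * u^12 = g * (-1 - 2*X - 6*X^2 + 4*X^3 - 4*X^4)"
    unfolding g_def X3[symmetric] X6[symmetric] by (simp add: algebra_simps power2_eq_square power3_eq_cube power4_eq_xxxx eval_nat_numeral)
  have bneg: "-1 - 2*X - 6*X^2 + 4*X^3 - 4*X^4 < 0"
  proof -
    have "X^3 \<le> X^2" using X0 X1' by (simp add: power_decreasing)
    moreover have "0 \<le> X^4" "0 \<le> X^2" using X0 by simp_all
    ultimately show ?thesis using X0 by linarith
  qed
  have aneg: "-1 - 6*X + 6*X^2 - 8*X^3 < 0"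
  proof -
    have "X^2 \<le> X" using X0 X1' by (simp add: power2_eq_square mult_le_one mult_left_le_one_le)
    moreover have "0 \<le> X^3" using X0 by simp
    ultimately show ?thesis using X0 by linarith
  qed
  have peq: "(1 - 4*X^2) * (1 + 8*X^3) - 4*X*(1 - X^3)*(4*X - 1) = g * (-1 - 6*X + 6*X^2 - 8*X^3)"
    unfolding g_def by (simp add: algebra_simps power2_eq_square power3_eq_cube power4_eq_xxxx eval_nat_numeral)
  have key: "(2*X + Y)^2 - R^2 = (Y*(4*X - 1) - (1 - 4*X^2))"
    unfolding R2 by (simp add: algebra_simps power2_eq_square)
  have key2: "(Y*(4*X - 1) - (1 - 4*X^2)) * (1 + 8*X^3) = - ((1 - 4*X^2) * (1 + 8*X^3) - 4*X*(1 - X^3)*(4*X - 1))"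
  proof -
    have "(Y*(4*X - 1) - (1 - 4*X^2)) * (1 + 8*X^3) = (Y * (1 + 8 * X^3)) * (4*X - 1) - (1 - 4*X^2) * (1 + 8*X^3)"
      by (simp add: algebra_simps)
    also have "\<dots> = 4 * X * (1 - X^3) * (4*X - 1) - (1 - 4*X^2) * (1 + 8*X^3)"
      by (simp only: Yeq)
    finally show ?thesis by simp
  qed
  have Rnn: "0 \<le> 2*X + Y" using X0 Y0 by simp
  show ?thesis
  proof (intro conjI impI)
    assume h: "0 \<le> 1 - 20 * u^6 - 8 * u^12"
    then have "g \<le> 0" unfolding q1eq using bneg by (simp add: zero_le_mult_iff)
    then have "0 \<le> g * (-1 - 6*X + 6*X^2 - 8*X^3)" using aneg by (simp add: mult_nonpos_nonpos)
    then have "(Y*(4*X - 1) - (1 - 4*X^2)) * (1 + 8*X^3) \<le> 0" unfolding key2 peq by simp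
    then have "(Y*(4*X - 1) - (1 - 4*X^2)) \<le> 0" using Qpos by (simp add: mult_le_0_iff)
    then have "(2*X + Y)^2 \<le> R^2" using key by simp
    then have "2*X + Y \<le> R" using Rpos Rnn by (simp add: power2_le_iff_abs_le)
    then have "2 * A = R - (2*X + Y)" using Aeq by simp
    then show "u^2 = - (1/2) * s^2 + (1/2) * R - A" unfolding X_def Y_def by simp
  next
    assume h: "1 - 20 * u^6 - 8 * u^12 \<le> 0"
    then have "0 \<le> g" unfolding q1eq using bneg by (simp add: mult_le_0_iff)
    then have "g * (-1 - 6*X + 6*X^2 - 8*X^3) \<le> 0" using aneg by (simp add: mult_nonneg_nonpos)
    then have "0 \<le> (Y*(4*X - 1) - (1 - 4*X^2)) * (1 + 8*X^3)" unfolding key2 peq by simp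
    then have "0 \<le> (Y*(4*X - 1) - (1 - 4*X^2))" using Qpos by (simp add: zero_le_mult_iff)
    then have "R^2 \<le> (2*X + Y)^2" using key by simp
    then have "R \<le> 2*X + Y" using Rpos Rnn by (simp add: power2_le_iff_abs_le)
    then have "2 * A = (2*X + Y) - R" using Aeq by simp
    then show "u^2 = - (1/2) * s^2 + (1/2) * R + A" unfolding X_def Y_def by simp
  qed
qed



lemma alg_A1:
  fixes s c q :: real
  assumes q: "q > 0" and q2: "q^2 = 1 + 8 * s^6" and c2: "c^2 = 1 - s^6"
  shows "((2 * c * c + - 3 * s ^ 5 * (2 * s)) * q - 2 * s * c * (24 * s ^ 5 * c / q)) / (q * q)
         = 2 * (1 - 20 * s ^ 6 - 8 * s ^ 12) / q ^ 3"
proof -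
  have "((2 * c * c + - 3 * s ^ 5 * (2 * s)) * q - 2 * s * c * (24 * s ^ 5 * c / q)) / (q * q)
        = ((2 * c^2 - 6 * s^6) * q^2 - 48 * s^6 * c^2) / q^3"
    using q by (simp add: field_simps power2_eq_square power3_eq_cube eval_nat_numeral)
  also have "\<dots> = 2 * (1 - 20 * s ^ 6 - 8 * s ^ 12) / q ^ 3"
    unfolding q2 c2 by (simp add: algebra_simps eval_nat_numeral)
  finally show ?thesis .
qed

lemma alg_A2:
  fixes s c q :: real
  assumes q: "q > 0" and q2: "q^2 = 1 + 8 * s^6" and c2: "c^2 = 1 - s^6"
  shows "((- (240 * s ^ 5 * c) - 192 * s ^ 11 * c) * q ^ 3 - 2 * (1 - 20 * s ^ 6 - 8 * s ^ 12) * (72 * s ^ 5 * c * q)) / (q ^ 3 * q ^ 3)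
         = - 12 * (2 * s * c / q) ^ 5"
proof -
  have q3: "q^3 = q * (1 + 8 * s^6)" using q2 by (simp add: power2_eq_square power3_eq_cube)
  have c5: "c^5 = c * (1 - s^6)^2" using c2 by (simp add: power2_eq_square eval_nat_numeral)
  have "(- (240 * s ^ 5 * c) - 192 * s ^ 11 * c) * q ^ 3 - 2 * (1 - 20 * s ^ 6 - 8 * s ^ 12) * (72 * s ^ 5 * c * q)
       = - 384 * s^5 * c * (1 - s^6)^2 * q"
    unfolding q3 by (simp add: algebra_simps eval_nat_numeral)
  then have "((- (240 * s ^ 5 * c) - 192 * s ^ 11 * c) * q ^ 3 - 2 * (1 - 20 * s ^ 6 - 8 * s ^ 12) * (72 * s ^ 5 * c * q)) / (q ^ 3 * q ^ 3)
       = - 384 * s^5 * c * (1 - s^6)^2 * q / (q ^ 3 * q ^ 3)" by simp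
  also have "\<dots> = - 384 * s^5 * c * (1 - s^6)^2 / q^5"
    using q by (simp add: field_simps eval_nat_numeral)
  also have "\<dots> = - 12 * (2 * s * c / q) ^ 5"
    unfolding power_divide power_mult_distrib c5 by (simp add: field_simps eval_nat_numeral)
  finally show ?thesis .
qed


definition QQ :: "real \<Rightarrow> real" where "QQ t = sqrt (1 + 8 * SS t ^ 6)"

lemma in_pos: "0 < 1 + 8 * SS t ^ 6"
proof -
  have "0 \<le> SS t ^ 6" by (simp add: zero_le_even_power)
  then show ?thesis by linarith
qed

lemma QQ_pos: "QQ t > 0" unfolding QQ_def using in_pos by simp
lemma QQ2: "QQ t ^ 2 = 1 + 8 * SS t ^ 6" unfolding QQ_def using in_pos[of t] by simp
lemma CC2: "CC t ^ 2 = 1 - SS t ^ 6" using sol_energy[OF sol_SS, of t] by simp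

lemma QQ_deriv: "(QQ has_real_derivative 24 * SS t ^ 5 * CC t / QQ t) (at t)"
proof (rule DERIV_cong)
  show "(QQ has_real_derivative inverse (sqrt (1 + 8 * SS t ^ 6)) / 2 * (0 + 8 * (of_nat 6 * (CC t * SS t ^ (6 - Suc 0))))) (at t)"
    unfolding QQ_def[abs_def]
    by (rule DERIV_chain2[where f=sqrt and g="\<lambda>t. 1 + 8 * SS t ^ 6", OF DERIV_real_sqrt[OF in_pos[of t]]])
       (rule DERIV_add[OF DERIV_const DERIV_cmult[OF DERIV_power[OF SS_deriv]]])
  show "inverse (sqrt (1 + 8 * SS t ^ 6)) / 2 * (0 + 8 * (of_nat 6 * (CC t * SS t ^ (6 - Suc 0)))) = 24 * SS t ^ 5 * CC t / QQ t"
    unfolding QQ_def by (simp add: field_simps)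
qed

definition DD :: "real \<Rightarrow> real" where "DD t = 2 * SS t * CC t / QQ t"
definition D1 :: "real \<Rightarrow> real" where "D1 t = 2 * (1 - 20 * SS t ^ 6 - 8 * SS t ^ 12) / QQ t ^ 3"

lemma DD_deriv: "(DD has_real_derivative D1 t) (at t)"
proof (rule DERIV_cong)
  have n: "((\<lambda>x. 2 * SS x * CC x) has_real_derivative 2 * CC t * CC t + - 3 * SS t ^ 5 * (2 * SS t)) (at t)"
    using DERIV_mult[OF DERIV_cmult[OF SS_deriv] CC_deriv, of 2] by simp
  show "(DD has_real_derivative ((2 * CC t * CC t + - 3 * SS t ^ 5 * (2 * SS t)) * QQ t - 2 * SS t * CC t * (24 * SS t ^ 5 * CC t / QQ t)) / (QQ t * QQ t)) (at t)"
    unfolding DD_def[abs_def] using QQ_pos[of t]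
    by (intro DERIV_divide[OF n QQ_deriv]) auto
  show "((2 * CC t * CC t + - 3 * SS t ^ 5 * (2 * SS t)) * QQ t - 2 * SS t * CC t * (24 * SS t ^ 5 * CC t / QQ t)) / (QQ t * QQ t) = D1 t"
    unfolding D1_def by (rule alg_A1[OF QQ_pos QQ2 CC2])
qed

lemma D1_deriv: "(D1 has_real_derivative - 12 * DD t ^ 5) (at t)"
proof (rule DERIV_cong)
  have n: "((\<lambda>t. 2 * (1 - 20 * SS t ^ 6 - 8 * SS t ^ 12)) has_real_derivative - (240 * SS t ^ 5 * CC t) - 192 * SS t ^ 11 * CC t) (at t)"
  proof (rule DERIV_cong)
    show "((\<lambda>t. 2 * (1 - 20 * SS t ^ 6 - 8 * SS t ^ 12)) has_real_derivative
       2 * (0 - 20 * (of_nat 6 * (CC t * SS t ^ (6 - Suc 0))) - 8 * (of_nat 12 * (CC t * SS t ^ (12 - Suc 0))))) (at t)"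
      by (rule DERIV_cmult[OF DERIV_diff[OF DERIV_diff[OF DERIV_const DERIV_cmult[OF DERIV_power[OF SS_deriv]]] DERIV_cmult[OF DERIV_power[OF SS_deriv]]]])
  qed (simp add: algebra_simps)
  have d3: "((\<lambda>t. QQ t ^ 3) has_real_derivative 72 * SS t ^ 5 * CC t * QQ t) (at t)"
  proof (rule DERIV_cong)
    show "((\<lambda>t. QQ t ^ 3) has_real_derivative of_nat 3 * (24 * SS t ^ 5 * CC t / QQ t * QQ t ^ (3 - Suc 0))) (at t)"
      by (rule DERIV_power[OF QQ_deriv])
    show "of_nat 3 * (24 * SS t ^ 5 * CC t / QQ t * QQ t ^ (3 - Suc 0)) = 72 * SS t ^ 5 * CC t * QQ t"
      using QQ_pos[of t] by (simp add: field_simps power2_eq_square)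
  qed
  show "(D1 has_real_derivative ((- (240 * SS t ^ 5 * CC t) - 192 * SS t ^ 11 * CC t) * QQ t ^ 3 - 2 * (1 - 20 * SS t ^ 6 - 8 * SS t ^ 12) * (72 * SS t ^ 5 * CC t * QQ t)) / (QQ t ^ 3 * QQ t ^ 3)) (at t)"
    unfolding D1_def[abs_def] using QQ_pos[of t]
    by (intro DERIV_divide[OF n d3]) auto
  show "((- (240 * SS t ^ 5 * CC t) - 192 * SS t ^ 11 * CC t) * QQ t ^ 3 - 2 * (1 - 20 * SS t ^ 6 - 8 * SS t ^ 12) * (72 * SS t ^ 5 * CC t * QQ t)) / (QQ t ^ 3 * QQ t ^ 3) = - 12 * DD t ^ 5"
    unfolding DD_def by (rule alg_A2[OF QQ_pos QQ2 CC2])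
qed

lemma half_deriv: "((\<lambda>x::real. x / 2) has_real_derivative 1 / 2) (at x)"
  by (auto intro!: derivative_eq_intros)

lemma sol_half: "sol (\<lambda>x. DD (x / 2)) (\<lambda>x. D1 (x / 2) / 2)"
  unfolding sol_def
proof (intro conjI allI)
  fix x :: real
  show "((\<lambda>x. DD (x / 2)) has_real_derivative D1 (x / 2) / 2) (at x)"
    using DERIV_chain2[where f=DD and g="\<lambda>x. x / 2", OF DD_deriv half_deriv] by simp
  have "((\<lambda>x. D1 (x / 2)) has_real_derivative - 12 * DD (x/2) ^ 5 * (1/2)) (at x)"
    using DERIV_chain2[where f=D1 and g="\<lambda>x. x / 2", OF D1_deriv half_deriv] by simp
  then have "((\<lambda>x. D1 (x / 2) / 2) has_real_derivative - 12 * DD (x/2) ^ 5 * (1/2) / 2) (at x)"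
    by (rule DERIV_cdivide)
  then show "((\<lambda>x. D1 (x / 2) / 2) has_real_derivative - 3 * DD (x / 2) ^ 5) (at x)"
    by simp
next
  show "DD (0 / 2) = 0" by (simp add: DD_def SS_0)
  show "D1 (0 / 2) / 2 = 1" by (simp add: D1_def QQ_def SS_0)
qed

lemma doubling: "SS x = DD (x / 2)"
  using sol_unique[OF sol_SS sol_half] by simp

lemma doubling_deriv: "CC x = D1 (x / 2) / 2"
proof -
  have h: "(\<lambda>x. DD (x / 2)) = SS" using doubling by auto
  have "(SS has_real_derivative D1 (x / 2) / 2) (at x)"
    using sol_half unfolding sol_def h by blast
  then show ?thesis using DERIV_unique[OF SS_deriv] by blast
qed

lemma cos_shift: "cos (z + 2 * pi * of_int m) = cos z"
  by (simp add: cos_add)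

lemma cos_sign1:
  assumes "KK * (4 * real_of_int m - 1) \<le> l" "l \<le> KK * (4 * real_of_int m + 1)"
  shows "0 \<le> cos (th l)"
proof -
  define z where "z = th l - 2 * pi * of_int m"
  have p: "0 < pi / (2 * KK)" using KK_pos by simp
  have e: "th l = (pi / (2 * KK)) * l" unfolding th_def by simp
  have "(pi / (2 * KK)) * (KK * (4 * real_of_int m - 1)) \<le> th l"
    unfolding e by (rule mult_left_mono[OF assms(1)]) (use p in simp)
  moreover have "th l \<le> (pi / (2 * KK)) * (KK * (4 * real_of_int m + 1))"
    unfolding e by (rule mult_left_mono[OF assms(2)]) (use p in simp)
  moreover have "(pi / (2 * KK)) * (KK * (4 * real_of_int m - 1)) = 2 * pi * of_int m - pi / 2"
    "(pi / (2 * KK)) * (KK * (4 * real_of_int m + 1)) = 2 * pi * of_int m + pi / 2"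
    using KK_pos by (simp_all add: field_simps)
  ultimately have "- (pi / 2) \<le> z" "z \<le> pi / 2" unfolding z_def by auto
  then have "0 \<le> cos z" by (rule cos_ge_zero)
  moreover have "cos (th l) = cos z" unfolding z_def using cos_shift[of "th l - 2 * pi * of_int m" m] by simp
  ultimately show ?thesis by simp
qed

lemma cos_sign2:
  assumes "KK * (4 * real_of_int m + 1) \<le> l" "l \<le> KK * (4 * real_of_int m + 3)"
  shows "cos (th l) \<le> 0"
proof -
  define z where "z = th l - 2 * pi * of_int m - pi"
  have p: "0 < pi / (2 * KK)" using KK_pos by simp
  have e: "th l = (pi / (2 * KK)) * l" unfolding th_def by simp
  have "(pi / (2 * KK)) * (KK * (4 * real_of_int m + 1)) \<le> th l"
    unfolding e by (rule mult_left_mono[OF assms(1)]) (use p in simp)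
  moreover have "th l \<le> (pi / (2 * KK)) * (KK * (4 * real_of_int m + 3))"
    unfolding e by (rule mult_left_mono[OF assms(2)]) (use p in simp)
  moreover have "(pi / (2 * KK)) * (KK * (4 * real_of_int m + 1)) = 2 * pi * of_int m + pi / 2"
    "(pi / (2 * KK)) * (KK * (4 * real_of_int m + 3)) = 2 * pi * of_int m + 3 * pi / 2"
    using KK_pos by (simp_all add: field_simps)
  ultimately have "- (pi / 2) \<le> z" "z \<le> pi / 2" unfolding z_def by auto
  then have "0 \<le> cos z" by (rule cos_ge_zero)
  moreover have "cos (th l) = - cos z"
  proof -
    have "th l = (z + pi) + 2 * pi * of_int m" unfolding z_def by simp
    then have "cos (th l) = cos (z + pi)" using cos_shift[of "z + pi" m] by simp
    then show ?thesis by simp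
  qed
  ultimately show ?thesis by simp
qed

theorem mainTheorem14:
  fixes m :: int and l :: real
  defines "s \<equiv> sleaf 3 l"
  defines "A \<equiv> (1/2) * sqrt (-1 - s^2 + 2 * s^4 + (2 - 2 * s^6) / sqrt (1 + s^2 + s^4))"
  shows "(leaf_pi 3 / 2 * (4 * real_of_int m - 1) \<le> l \<and> l \<le> leaf_pi 3 / 2 * (4 * real_of_int m + 1)
            \<longrightarrow> (sleaf 3 (l / 2))^2 = - (1/2) * s^2 + (1/2) * sqrt (1 + s^2 + s^4) - A)
       \<and> (leaf_pi 3 / 2 * (4 * real_of_int m + 1) \<le> l \<and> l \<le> leaf_pi 3 / 2 * (4 * real_of_int m + 3)
            \<longrightarrow> (sleaf 3 (l / 2))^2 = - (1/2) * s^2 + (1/2) * sqrt (1 + s^2 + s^4) + A)"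
proof -
  define u where "u = SS (l / 2)"
  define c where "c = CC (l / 2)"
  have c2: "c^2 = 1 - u^6" unfolding c_def u_def by (rule CC2)
  have sdef: "s = 2 * u * c / sqrt (1 + 8 * u^6)"
    unfolding s_def sleaf3_eq u_def c_def doubling[of l] DD_def QQ_def ..
  have lp: "leaf_pi 3 / 2 = KK" using leaf_pi3 by simp
  have q3: "QQ (l / 2) ^ 3 > 0" using QQ_pos by simp
  have CCl: "CC l = (1 - 20 * u^6 - 8 * u^12) / QQ (l / 2) ^ 3"
    unfolding doubling_deriv[of l] D1_def u_def using q3 by (simp add: field_simps)
  have sgn1: "0 \<le> CC l \<Longrightarrow> 0 \<le> 1 - 20 * u^6 - 8 * u^12"
    using q3 unfolding CCl by (simp add: zero_le_divide_iff)
  have sgn2: "CC l \<le> 0 \<Longrightarrow> 1 - 20 * u^6 - 8 * u^12 \<le> 0"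
    using q3 unfolding CCl by (simp add: divide_le_0_iff)
  have sq: "0 \<le> sqrt (1 - SS l ^ 6)" using SS6_le[of l] by simp
  note fa = final_alg[OF c2 sdef]
  show ?thesis
  proof (intro conjI impI)
    assume h: "leaf_pi 3 / 2 * (4 * real_of_int m - 1) \<le> l \<and> l \<le> leaf_pi 3 / 2 * (4 * real_of_int m + 1)"
    then have "0 \<le> cos (th l)" using cos_sign1[of m l] unfolding lp by auto
    then have "0 \<le> CC l" unfolding CC_def using sq by (simp add: sgn_real_def)
    then have "0 \<le> 1 - 20 * u^6 - 8 * u^12" by (rule sgn1)
    then show "(sleaf 3 (l / 2))^2 = - (1/2) * s^2 + (1/2) * sqrt (1 + s^2 + s^4) - A"
      using fa unfolding A_def sleaf3_eq u_def by blast
  next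
    assume h: "leaf_pi 3 / 2 * (4 * real_of_int m + 1) \<le> l \<and> l \<le> leaf_pi 3 / 2 * (4 * real_of_int m + 3)"
    then have "cos (th l) \<le> 0" using cos_sign2[of m l] unfolding lp by auto
    then have "CC l \<le> 0" unfolding CC_def using sq by (auto simp: sgn_real_def)
    then have "1 - 20 * u^6 - 8 * u^12 \<le> 0" by (rule sgn2)
    then show "(sleaf 3 (l / 2))^2 = - (1/2) * s^2 + (1/2) * sqrt (1 + s^2 + s^4) + A"
      using fa unfolding A_def sleaf3_eq u_def by blast
  qed
qed


end
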